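(* Let $m\ge1$, $N=2^m$, let $\mathcal{A}\subseteq[0,N-1]$ be nonempty such that the monomial set $\mathcal{I}=\{\mathbf{x}^{\mathrm{bin}(N-1-i)}:i\in\mathcal{A}\}$ is decreasing, and suppose the code $\mathcal{C}_{\boldsymbol{G}_N}(\mathcal{A})$ has minimum distance $2^{m-r}$. Let $\mathbf{P}\in\mathbb{F}_2^{N\times N}$ be upper triangular with unit diagonal. Then the minimum distance of $\mathcal{C}_{\mathbf{P}\boldsymbol{G}_N}(\mathcal{A})$ is also $2^{m-r}$, and the number of codewords of $\mathcal{C}_{\mathbf{P}\boldsymbol{G}_N}(\mathcal{A})$ of Hamming weight $2^{m-r}$ is at least $2^r$.
   Context: $\boldsymbol{G}_N=\begin{pmatrix}1&0\\1&1\end{pmatrix}^{\otimes m}$ over $\mathbb{F}_2$, rows/columns indexed by $0,\dots,N-1$; $\mathcal{C}_{\mathbf{B}}(\mathcal{S})$ is the code spanned by the rows of $\mathbf{B}$ indexed by $\mathcal{S}$. For $i\in[0,N-1]$, $\mathrm{bin}(i)=(i_0,\dots,i_{m-1})$ with $i=\sum_j i_j2^j$, $\mathbf{x}^{b}=\prod_jx_j^{b_j}$; row $i$ of $\boldsymbol{G}_N$ is the evaluation vector of $\mathbf{x}^{\mathrm{bin}(N-1-i)}$ on $\mathbb{F}_2^m$. Order on monomials: $f\preceq_w g$ iff $f\mid g$; for $f=x_{i_1}\cdots x_{i_s}$, $g=x_{j_1}\cdots x_{j_s}$ with $i_1<\dots<i_s$, $j_1<\dots<j_s$, $f\preceq_{sh}g$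 iff $i_\ell\le j_\ell$ for all $\ell$; $f\preceq g$ iff some monomial $g^*$ satisfies $f\preceq_{sh}g^*\preceq_w g$. A set $\mathcal{I}$ of monomials is decreasing if $f\in\mathcal{I}$, $g\preceq f$ imply $g\in\mathcal{I}$. *)

theory Defs
  imports Main "HOL-Library.Z2"
begin

text \<open>G_N = (1 0; 1 1) Kronecker-power m, with (A (x) B) i j = A (i div n) (j div n) * B (i mod n) (j mod n).\<close>
definition kernel2 :: "nat \<Rightarrow> nat \<Rightarrow> bit" where
  "kernel2 i j = (if i = 0 \<and> j = 1 then 0 else 1)"

fun polarG :: "nat \<Rightarrow> nat \<Rightarrow> nat \<Rightarrow> bit" where
  "polarG 0 i j = 1"
| "polarG (Suc m) i j =
     kernel2 (i div 2 ^ m) (j div 2 ^ m) * polarG m (i mod 2 ^ m) (j mod 2 ^ m)"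

definition matmul :: "nat \<Rightarrow> (nat \<Rightarrow> nat \<Rightarrow> bit) \<Rightarrow> (nat \<Rightarrow> nat \<Rightarrow> bit) \<Rightarrow> nat \<Rightarrow> nat \<Rightarrow> bit" where
  "matmul N P Q i j = (\<Sum>k<N. P i k * Q k j)"

definition row_code :: "nat \<Rightarrow> (nat \<Rightarrow> nat \<Rightarrow> bit) \<Rightarrow> nat set \<Rightarrow> (nat \<Rightarrow> bit) set" where
  "row_code N B S = {c. \<exists>a::nat \<Rightarrow> bit. c = (\<lambda>j. if j < N then (\<Sum>i\<in>S. a i * B i j) else 0)}"

definition hweight :: "nat \<Rightarrow> (nat \<Rightarrow> bit) \<Rightarrow> nat" where
  "hweight N c = card {j. j < N \<and> c j \<noteq> 0}"

definition min_distance :: "nat \<Rightarrow> (nat \<Rightarrow> bit) set \<Rightarrow> nat" where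
  "min_distance N C = Min {hweight N c | c. c \<in> C \<and> c \<noteq> (\<lambda>_. 0)}"

text \<open>Monomials x^b with b in F_2^m are represented by their support {j. b_j = 1}.\<close>
definition mono_of_bin :: "nat \<Rightarrow> nat set" where
  "mono_of_bin k = {j. bit k j}"

definition mono_of_index :: "nat \<Rightarrow> nat \<Rightarrow> nat set" where
  "mono_of_index m i = mono_of_bin (2 ^ m - 1 - i)"

definition shift_le :: "nat set \<Rightarrow> nat set \<Rightarrow> bool" where
  "shift_le f g \<longleftrightarrow> finite f \<and> finite g \<and> card f = card g \<and>
     (\<forall>l < card f. sorted_list_of_set f ! l \<le> sorted_list_of_set g ! l)"

definition mono_le :: "nat set \<Rightarrow> nat set \<Rightarrow> bool" where
  "mono_le f g \<longleftrightarrow> (\<exists>g'. shift_le f g' \<and> g' \<subseteq> g)"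

definition decreasing :: "nat set set \<Rightarrow> bool" where
  "decreasing I \<longleftrightarrow> (\<forall>f \<in> I. \<forall>g. mono_le g f \<longrightarrow> g \<in> I)"

end

theory Submission
  imports Defs
begin
declare add_bit_eq_xor[simp del] mult_bit_eq_and[simp del]

definition sub :: "nat \<Rightarrow> nat \<Rightarrow> bool" where
  "sub j i \<longleftrightarrow> (\<forall>l. bit j l \<longrightarrow> bit i l)"

lemma lt_pow_bits: "(x::nat) < 2 ^ m \<longleftrightarrow> (\<forall>n. bit x n \<longrightarrow> n < m)"
proof
  assume "x < 2 ^ m"
  show "\<forall>n. bit x n \<longrightarrow> n < m"
  proof (intro allI impI, rule ccontr)
    fix n assume b: "bit x n" and "\<not> n < m"
    then have "x < 2 ^ n" using \<open>x < 2 ^ m\<close>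
      by (meson less_le_trans not_less one_le_numeral power_increasing)
    then have "x div 2 ^ n = 0" by simp
    with b show False by (simp add: bit_iff_odd)
  qed
next
  assume h: "\<forall>n. bit x n \<longrightarrow> n < m"
  have "take_bit m x = x"
    by (rule bit_eqI) (use h in \<open>auto simp: bit_take_bit_iff\<close>)
  then show "x < 2 ^ m" by (simp add: take_bit_nat_eq_self_iff)
qed

lemma polarG_char:
  "i < 2 ^ m \<Longrightarrow> j < 2 ^ m \<Longrightarrow> polarG m i j = (if sub j i then 1 else 0)"
proof (induction m arbitrary: i j)
  case 0
  then show ?case by (simp add: sub_def)
next
  case (Suc m)
  have di: "i div 2 ^ m = (if bit i m then 1 else 0)"
  proof -
    have "i div 2 ^ m < 2" using Suc.prems by (simp add: less_mult_imp_div_less power_Suc mult.commute)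
    then have "i div 2 ^ m = 0 \<or> i div 2 ^ m = 1" by linarith
    then show ?thesis by (auto simp: bit_iff_odd)
  qed
  have dj: "j div 2 ^ m = (if bit j m then 1 else 0)"
  proof -
    have "j div 2 ^ m < 2" using Suc.prems by (simp add: less_mult_imp_div_less power_Suc mult.commute)
    then have "j div 2 ^ m = 0 \<or> j div 2 ^ m = 1" by linarith
    then show ?thesis by (auto simp: bit_iff_odd)
  qed
  have IH: "polarG m (i mod 2^m) (j mod 2^m) = (if sub (j mod 2^m) (i mod 2^m) then 1 else 0)"
    by (rule Suc.IH) simp_all
  have s1: "sub (j mod 2^m) (i mod 2^m) \<longleftrightarrow> (\<forall>l<m. bit j l \<longrightarrow> bit i l)"
    by (auto simp: sub_def simp flip: take_bit_eq_mod simp add: bit_take_bit_iff)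
  have bi: "\<forall>n. bit i n \<longrightarrow> n < Suc m" "\<forall>n. bit j n \<longrightarrow> n < Suc m"
    using Suc.prems lt_pow_bits by blast+
  have s2: "sub j i \<longleftrightarrow> (\<forall>l<m. bit j l \<longrightarrow> bit i l) \<and> (bit j m \<longrightarrow> bit i m)"
    using bi unfolding sub_def by (metis less_Suc_eq)
  show ?case
    using di dj IH s1 s2 by (auto simp: kernel2_def)
qed

lemma sub_le: "sub k i \<Longrightarrow> k \<le> (i::nat)"
proof -
  assume s: "sub k i"
  have "k + (xor i k) = or k (xor i k)"
    by (rule disjunctive_add) (use s in \<open>auto simp: bit_xor_iff sub_def\<close>)
  also have "\<dots> = i" using s by (auto simp: bit_eq_iff bit_or_iff bit_xor_iff sub_def)
  finally show ?thesis by linarith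
qed

lemma sub_refl[simp]: "sub i i" by (simp add: sub_def)

lemma even_card:
  assumes "k < 2 ^ m" "i < k"
  shows "even (card {j. j < 2 ^ m \<and> and j i = z \<and> sub j k})"
proof -
  have "\<not> sub k i" using assms(2) sub_le by (meson leD)
  then obtain l where kl: "bit k l" and il: "\<not> bit i l" unfolding sub_def by blast
  have lm: "l < m" using kl assms(1) lt_pow_bits by blast
  define Y where "Y = {j. j < 2 ^ m \<and> and j i = z \<and> sub j k}"
  define Y0 where "Y0 = {j\<in>Y. \<not> bit j l}"
  define Y1 where "Y1 = {j\<in>Y. bit j l}"
  have fin: "finite Y" unfolding Y_def by simp
  have un: "Y = Y0 \<union> Y1" "Y0 \<inter> Y1 = {}" unfolding Y0_def Y1_def by auto
  have ff: "flip_bit l (flip_bit l j) = j" for j :: nat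
    by (rule bit_eqI) (auto simp: bit_flip_bit_iff)
  have mem: "flip_bit l j \<in> Y" if "j \<in> Y" for j
  proof -
    have "j < 2 ^ m" "and j i = z" "sub j k" using that by (auto simp: Y_def)
    moreover have "flip_bit l j < 2 ^ m"
      using \<open>j < 2 ^ m\<close> lm by (auto simp: lt_pow_bits bit_flip_bit_iff)
    moreover have "and (flip_bit l j) i = and j i"
      by (rule bit_eqI) (use il in \<open>auto simp: bit_and_iff bit_flip_bit_iff\<close>)
    moreover have "sub (flip_bit l j) k"
      using \<open>sub j k\<close> kl by (auto simp: sub_def bit_flip_bit_iff)
    ultimately show ?thesis by (simp add: Y_def)
  qed
  have "bij_betw (flip_bit l) Y0 Y1"
    by (rule bij_betw_byWitness[where f'="flip_bit l"])
      (auto simp: ff Y0_def Y1_def mem bit_flip_bit_iff)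
  then have "card Y0 = card Y1" by (rule bij_betw_same_card)
  moreover have "card Y = card Y0 + card Y1"
    using un fin by (simp add: card_Un_disjoint)
  ultimately show ?thesis unfolding Y_def by simp
qed

lemma key:
  assumes "i < 2 ^ m" "b i = 1" "\<forall>k<i. b k = 0"
  shows "card {j. j < 2 ^ m \<and> sub j i}
     \<le> card {j. j < 2 ^ m \<and> (\<Sum>k<2 ^ m. b k * polarG m k j) \<noteq> 0}"
proof -
  define N :: nat where "N = 2 ^ m"
  define S where "S j = (\<Sum>k<N. b k * polarG m k j)" for j
  have cube: "(\<Sum>j\<in>{j. j < N \<and> and j i = z}. S j) = 1" if z: "z < N" "sub z i" for z
  proof -
    define X where "X = {j. j < N \<and> and j i = z}"
    have "(\<Sum>j\<in>X. S j) = (\<Sum>k<N. b k * (\<Sum>j\<in>X. polarG m k j))"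
      unfolding S_def sum_distrib_left by (rule sum.swap)
    also have "\<dots> = (\<Sum>k<N. if k = i then 1 else 0)"
    proof (rule sum.cong[OF refl])
      fix k assume "k \<in> {..<N}"
      then have kN: "k < N" by simp
      have "(\<Sum>j\<in>X. polarG m k j) = (\<Sum>j\<in>X. if sub j k then 1 else 0)"
        by (rule sum.cong[OF refl]) (use kN in \<open>auto simp: X_def N_def polarG_char\<close>)
      also have "\<dots> = of_nat (card {j\<in>X. sub j k})"
        by (simp add: sum.If_cases X_def Int_def conj_assoc)
      finally have e: "(\<Sum>j\<in>X. polarG m k j) = of_nat (card {j\<in>X. sub j k})" .
      show "b k * (\<Sum>j\<in>X. polarG m k j) = (if k = i then 1 else 0)"
      proof (cases "k < i")
        case True then show ?thesis using assms(3) by simp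
      next
        case False
        show ?thesis
        proof (cases "k = i")
          case True
          have "{j\<in>X. sub j k} = {z}"
            using z True by (auto simp: X_def sub_def bit_eq_iff bit_and_iff) blast+
          then show ?thesis using e True assms(2) by simp
        next
          case ne: False
          then have "i < k" using False by simp
          from even_card[OF kN[unfolded N_def] this, of z]
          have "even (card {j\<in>X. sub j k})" by (simp add: X_def N_def conj_assoc)
          then obtain q where "card {j\<in>X. sub j k} = 2 * q" by blast
          then show ?thesis using e ne by simp
        qed
      qed
    qed
    also have "\<dots> = 1" using assms(1) by (simp add: N_def)
    finally show ?thesis unfolding X_def .
  qed
  define W where "W = {j. j < N \<and> S j \<noteq> 0}"
  have "{j. j < N \<and> sub j i} \<subseteq> (\<lambda>j. and j i) ` W"
  proof
    fix z assume "z \<in> {j. j < N \<and> sub j i}"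
    then have z: "z < N" "sub z i" by auto
    have "\<exists>j\<in>{j. j < N \<and> and j i = z}. S j \<noteq> 0"
    proof (rule ccontr)
      assume "\<not> ?thesis"
      then have "(\<Sum>j\<in>{j. j < N \<and> and j i = z}. S j) = 0" by simp
      with cube[OF z] show False by simp
    qed
    then show "z \<in> (\<lambda>j. and j i) ` W" unfolding W_def by auto
  qed
  then have "card {j. j < N \<and> sub j i} \<le> card ((\<lambda>j. and j i) ` W)"
    by (rule card_mono[rotated]) (simp add: W_def)
  also have "\<dots> \<le> card W" by (rule card_image_le) (simp add: W_def)
  finally show ?thesis unfolding W_def S_def N_def .
qed

lemma bit_UNIV: "(UNIV :: bit set) = {0, 1}"
  by (auto intro: bit.exhaust)

lemma bit_cancel: "(x::bit) = y + z \<Longrightarrow> z = x + y"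
  by (cases x; cases y; cases z) simp_all

lemma rc_zero: "(\<lambda>_. 0) \<in> row_code N B S"
proof -
  have "(\<lambda>_. 0) = (\<lambda>j. if j < N then (\<Sum>i\<in>S. (\<lambda>_. 0::bit) i * B i j) else 0)"
    by (simp add: fun_eq_iff)
  then show ?thesis unfolding row_code_def mem_Collect_eq by (intro exI[of _ "\<lambda>_. 0::bit"])
qed

lemma rc_add: "c1 \<in> row_code N B S \<Longrightarrow> c2 \<in> row_code N B S \<Longrightarrow> (\<lambda>j. c1 j + c2 j) \<in> row_code N B S"
proof -
  assume "c1 \<in> row_code N B S" "c2 \<in> row_code N B S"
  then obtain a1 a2 where a: "c1 = (\<lambda>j. if j < N then (\<Sum>i\<in>S. a1 i * B i j) else 0)"
    "c2 = (\<lambda>j. if j < N then (\<Sum>i\<in>S. a2 i * B i j) else 0)" unfolding row_code_def by blast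
  show ?thesis unfolding row_code_def
    by (rule CollectI, rule exI[of _ "\<lambda>i. a1 i + a2 i"])
      (auto simp: a distrib_right sum.distrib)
qed

lemma rc_sum: "finite F \<Longrightarrow> (\<forall>x\<in>F. f x \<in> row_code N B S) \<Longrightarrow> (\<lambda>j. \<Sum>x\<in>F. f x j) \<in> row_code N B S"
proof (induction F rule: finite_induct)
  case empty then show ?case using rc_zero by simp
next
  case (insert x F)
  then show ?case using rc_add[of "f x" N B S "\<lambda>j. \<Sum>x\<in>F. f x j"] by simp
qed

lemma rc_row: "i \<in> S \<Longrightarrow> finite S \<Longrightarrow> (\<lambda>j. if j < N then B i j else 0) \<in> row_code N B S"
proof -
  assume "i \<in> S" "finite S"
  have "(\<Sum>k\<in>S. (\<lambda>k. if k = i then 1 else 0::bit) k * B k j) = B i j" for j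
  proof -
    have "(\<Sum>k\<in>S. (\<lambda>k. if k = i then 1 else 0::bit) k * B k j) = (\<Sum>k\<in>S. if k = i then B k j else 0)"
      by (rule sum.cong) auto
    also have "\<dots> = B i j" using \<open>i \<in> S\<close> \<open>finite S\<close> by (simp add: sum.delta')
    finally show ?thesis .
  qed
  then have "(\<lambda>j. if j < N then B i j else 0) = (\<lambda>j. if j < N then (\<Sum>k\<in>S. (\<lambda>k. if k = i then 1 else 0::bit) k * B k j) else 0)"
    by (simp add: fun_eq_iff)
  then show ?thesis unfolding row_code_def mem_Collect_eq by (intro exI[of _ "\<lambda>k. if k = i then 1 else 0::bit"])
qed

lemma rc_finite: "finite (row_code N B S)"
proof -
  have "row_code N B S \<subseteq> {f. \<forall>x. (x \<in> {..<N} \<longrightarrow> f x \<in> UNIV) \<and> (x \<notin> {..<N} \<longrightarrow> f x = 0)}"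
    unfolding row_code_def by auto
  moreover have "finite {f. \<forall>x. (x \<in> {..<N} \<longrightarrow> f x \<in> (UNIV::bit set)) \<and> (x \<notin> {..<N} \<longrightarrow> f x = 0)}"
    by (rule finite_set_of_finite_funs) (simp_all add: bit_UNIV)
  ultimately show ?thesis by (rule finite_subset)
qed

lemma hweight_le: "hweight N c \<le> N"
  unfolding hweight_def
  by (metis (no_types, lifting) card_lessThan card_mono finite_lessThan lessThan_iff mem_Collect_eq subsetI)


lemma exists_bits: "finite S \<Longrightarrow> \<exists>z::nat. \<forall>l. bit z l \<longleftrightarrow> l \<in> S"
proof (induction S rule: finite_induct)
  case empty then show ?case by (intro exI[of _ "0::nat"]) simp
next
  case (insert x F)
  then obtain z :: nat where "\<forall>l. bit z l \<longleftrightarrow> l \<in> F" by blast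
  then show ?case by (intro exI[of _ "set_bit x z"]) (auto simp: bit_set_bit_iff)
qed

lemma pow_count:
  assumes "i < 2 ^ m"
  shows "card {j. j < 2 ^ m \<and> sub j i} = 2 ^ card {l. l < m \<and> bit i l}"
proof -
  have bi: "bit i l \<Longrightarrow> l < m" for l using assms lt_pow_bits by blast
  have "bij_betw (\<lambda>j. {l. bit j l}) {j. j < 2 ^ m \<and> sub j i} (Pow {l. l < m \<and> bit i l})"
  proof (rule bij_betw_imageI)
    show "inj_on (\<lambda>j. {l. bit j l}) {j. j < 2 ^ m \<and> sub j i}"
      by (rule inj_onI) (rule bit_eqI, simp add: set_eq_iff)
    show "(\<lambda>j. {l. bit j l}) ` {j. j < 2 ^ m \<and> sub j i} = Pow {l. l < m \<and> bit i l}"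
    proof
      show "(\<lambda>j. {l. bit j l}) ` {j. j < 2 ^ m \<and> sub j i} \<subseteq> Pow {l. l < m \<and> bit i l}"
        using bi by (auto simp: sub_def)
      show "Pow {l. l < m \<and> bit i l} \<subseteq> (\<lambda>j. {l. bit j l}) ` {j. j < 2 ^ m \<and> sub j i}"
      proof
        fix T assume T: "T \<in> Pow {l. l < m \<and> bit i l}"
        then have "T \<subseteq> {..<m}" by auto
        then have "finite T" by (rule finite_subset) simp
        then obtain z :: nat where z: "\<forall>l. bit z l \<longleftrightarrow> l \<in> T" using exists_bits by blast
        have "z < 2 ^ m" unfolding lt_pow_bits using z T by auto
        moreover have "sub z i" using z T by (auto simp: sub_def)
        moreover have "T = {l. bit z l}" using z by auto
        ultimately show "T \<in> (\<lambda>j. {l. bit j l}) ` {j. j < 2 ^ m \<and> sub j i}" by blast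
      qed
    qed
  qed
  then have "card {j. j < 2 ^ m \<and> sub j i} = card (Pow {l. l < m \<and> bit i l})"
    by (rule bij_betw_same_card)
  then show ?thesis by (simp add: card_Pow)
qed

lemma s10: "(\<And>l. bit i l \<Longrightarrow> l < m) \<Longrightarrow> (i::nat) + xor i (mask m) = or i (xor i (mask m))"
    by (rule disjunctive_add) (auto simp: bit_xor_iff bit_mask_iff)
lemma s11: "(\<And>l. bit i l \<Longrightarrow> l < m) \<Longrightarrow> or (i::nat) (xor i (mask m)) = mask m"
  by (rule bit_eqI) (auto simp: bit_or_iff bit_xor_iff bit_mask_iff)
lemma s14: "mask m = (2::nat) ^ m - 1 \<Longrightarrow> i + xor i (mask m) = mask m \<Longrightarrow> 2 ^ m - 1 - i = xor (i::nat) (mask m)" by linarith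
lemma s16: "2 ^ m - 1 - i = xor (i::nat) (mask m) \<Longrightarrow> mono_of_index m i = {l. bit (xor i (mask m)) l}"
    unfolding mono_of_index_def mono_of_bin_def by (simp only:)
lemma s18: "(\<And>l. bit i l \<Longrightarrow> l < m) \<Longrightarrow> {l. bit (xor (i::nat) (mask m)) l} = {l. l < m \<and> \<not> bit i l}"
    by (auto simp: bit_xor_iff bit_mask_iff)

lemma mono_char:
  assumes "i < 2 ^ m"
  shows "mono_of_index m i = {l. l < m \<and> \<not> bit i l}"
proof -
  have bi: "\<And>l. bit i l \<Longrightarrow> l < m" using assms lt_pow_bits by blast
  have e: "i + xor i (mask m) = mask m" using s10[OF bi] s11[OF bi] by simp
  have eq: "2 ^ m - 1 - i = xor i (mask m)" by (rule s14[OF mask_eq_exp_minus_1 e])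
  show ?thesis using s16[OF eq] s18[OF bi] by simp
qed

lemma card_split: "card {l. l < m \<and> bit i l} + card {l. l < m \<and> \<not> bit (i::nat) l} = m"
proof -
  have "{l. l < m \<and> bit i l} \<union> {l. l < m \<and> \<not> bit (i::nat) l} = {..<m}" by auto
  moreover have "card ({l. l < m \<and> bit i l} \<union> {l. l < m \<and> \<not> bit (i::nat) l})
     = card {l. l < m \<and> bit i l} + card {l. l < m \<and> \<not> bit (i::nat) l}"
    by (rule card_Un_disjoint) auto
  ultimately show ?thesis by simp
qed

lemma sorted_ge: "sorted_wrt (<) (xs :: nat list) \<Longrightarrow> l < length xs \<Longrightarrow> l \<le> xs ! l"
proof (induction l)
  case 0 then show ?case by simp
next
  case (Suc l)
  then have "xs ! l < xs ! Suc l" using sorted_wrt_nth_less[of "(<)" xs l "Suc l"] by simp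
  with Suc show ?case by simp
qed


lemma bit_cancel2: "(x::bit) = y + z \<Longrightarrow> y = x + z"
  by (cases x; cases y; cases z) simp_all

lemma top_eq: "r \<le> m \<Longrightarrow> (2::nat) ^ m - 2 ^ r = push_bit r (mask (m - r))"
proof -
  assume "r \<le> m"
  then have "(2::nat) ^ m = 2 ^ (m - r) * 2 ^ r" by (simp flip: power_add)
  then show ?thesis by (simp add: push_bit_eq_mult mask_eq_exp_minus_1 diff_mult_distrib)
qed

lemma top_bits:
  assumes "r \<le> m" "t < 2 ^ r"
  shows "bit ((2::nat) ^ m - 2 ^ r + t) l \<longleftrightarrow> (l < r \<and> bit t l) \<or> (r \<le> l \<and> l < m)"
proof -
  have bt: "bit t l \<Longrightarrow> l < r" for l using assms(2) lt_pow_bits by blast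
  have "push_bit r (mask (m - r)) + t = or (push_bit r (mask (m - r))) t"
    by (rule disjunctive_add) (auto simp: bit_push_bit_iff_nat dest: bt)
  then have "bit ((2::nat) ^ m - 2 ^ r + t) l = bit (or (push_bit r (mask (m - r))) t) l"
    using top_eq[OF assms(1)] by simp
  also have "\<dots> \<longleftrightarrow> (l < r \<and> bit t l) \<or> (r \<le> l \<and> l < m)"
    using bt assms(1) by (auto simp: bit_or_iff bit_push_bit_iff_nat bit_mask_iff)
  finally show ?thesis .
qed

lemma sub_top:
  assumes "r \<le> m" "t < 2 ^ r" "j < 2 ^ m"
  shows "sub j ((2::nat) ^ m - 2 ^ r + t) \<longleftrightarrow> sub (take_bit r j) t"
proof -
  have bj: "bit j l \<Longrightarrow> l < m" for l using assms(3) lt_pow_bits by blast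
  show ?thesis
    unfolding sub_def top_bits[OF assms(1,2)] bit_take_bit_iff
    using bj by (meson not_le)
qed

lemma e_weight:
  assumes "r \<le> m" "t < 2 ^ r"
  shows "card {j. j < (2::nat) ^ m \<and> take_bit r j = t} = 2 ^ (m - r)"
proof -
  have pm: "(2::nat) ^ m = 2 ^ r * 2 ^ (m - r)" using assms(1) by (simp flip: power_add)
  have "{j. j < (2::nat) ^ m \<and> take_bit r j = t} = (\<lambda>q. t + 2 ^ r * q) ` {..<2 ^ (m - r)}"
  proof
    show "{j. j < (2::nat) ^ m \<and> take_bit r j = t} \<subseteq> (\<lambda>q. t + 2 ^ r * q) ` {..<2 ^ (m - r)}"
    proof
      fix j assume "j \<in> {j. j < (2::nat) ^ m \<and> take_bit r j = t}"
      then have j: "j < 2 ^ r * 2 ^ (m - r)" "j mod 2 ^ r = t" by (auto simp: take_bit_eq_mod pm)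
      have "j = t + 2 ^ r * (j div 2 ^ r)" using j(2) div_mult_mod_eq[of j "2 ^ r"] by (simp add: mult.commute)
      moreover have "j div 2 ^ r < 2 ^ (m - r)" using j(1)
        by (simp add: less_mult_imp_div_less mult.commute)
      ultimately show "j \<in> (\<lambda>q. t + 2 ^ r * q) ` {..<2 ^ (m - r)}" by blast
    qed
    show "(\<lambda>q. t + 2 ^ r * q) ` {..<2 ^ (m - r)} \<subseteq> {j. j < (2::nat) ^ m \<and> take_bit r j = t}"
    proof
      fix j assume "j \<in> (\<lambda>q. t + 2 ^ r * q) ` {..<2 ^ (m - r)}"
      then obtain q where q: "q < 2 ^ (m - r)" "j = t + 2 ^ r * q" by blast
      have "t + 2 ^ r * q < 2 ^ r * (q + 1)" using assms(2) by simp
      also have "\<dots> \<le> 2 ^ r * 2 ^ (m - r)" using q(1) by (intro mult_le_mono2) simp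
      finally have "j < 2 ^ m" using q(2) pm by simp
      moreover have "take_bit r j = t" using q(2) assms(2) by (simp add: take_bit_eq_mod)
      ultimately show "j \<in> {j. j < (2::nat) ^ m \<and> take_bit r j = t}" by simp
    qed
  qed
  moreover have "inj_on (\<lambda>q. t + 2 ^ r * q) {..<2 ^ (m - r)}" by (rule inj_onI) simp
  ultimately show ?thesis by (simp add: card_image)
qed

lemma lowerQ:
  assumes A: "A \<subseteq> {0..<2 ^ m}"
    and Pd: "\<forall>i < 2 ^ m. P i i = 1"
    and Pl: "\<forall>i < 2 ^ m. \<forall>j < i. P i j = 0"
    and c: "c \<in> row_code (2 ^ m) (matmul (2 ^ m) P (polarG m)) A"
    and nz: "c \<noteq> (\<lambda>_. 0)"
  shows "\<exists>i\<in>A. card {j. j < 2 ^ m \<and> sub j i} \<le> hweight (2 ^ m) c"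
proof -
  define N :: nat where "N = 2 ^ m"
  define G where "G = polarG m"
  have finA: "finite A" using A finite_subset by blast
  have AN: "i \<in> A \<Longrightarrow> i < N" for i using A by (auto simp: N_def)
  obtain a where ca: "c = (\<lambda>j. if j < N then (\<Sum>i\<in>A. a i * matmul N P G i j) else 0)"
    using c unfolding row_code_def N_def G_def by blast
  have ex: "\<exists>i\<in>A. a i \<noteq> 0"
  proof (rule ccontr)
    assume "\<not> ?thesis"
    then have "c = (\<lambda>_. 0)" unfolding ca by (auto simp: fun_eq_iff)
    with nz show False by simp
  qed
  define F where "F = {i\<in>A. a i \<noteq> 0}"
  define i0 where "i0 = Min F"
  have finF: "finite F" "F \<noteq> {}" using finA ex by (auto simp: F_def)
  have i0F: "i0 \<in> F" unfolding i0_def using finF by (rule Min_in)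
  have i0min: "i \<in> F \<Longrightarrow> i0 \<le> i" for i unfolding i0_def using finF by simp
  have i0A: "i0 \<in> A" "a i0 = 1" "i0 < N" using i0F AN by (auto simp: F_def)
  define b where "b k = (\<Sum>i\<in>A. a i * P i k)" for k
  have cs: "(\<Sum>i\<in>A. a i * matmul N P G i j) = (\<Sum>k<N. b k * G k j)" for j
  proof -
    have "(\<Sum>i\<in>A. a i * matmul N P G i j) = (\<Sum>i\<in>A. \<Sum>k<N. a i * P i k * G k j)"
      by (simp add: matmul_def sum_distrib_left mult.assoc)
    also have "\<dots> = (\<Sum>k<N. \<Sum>i\<in>A. a i * P i k * G k j)" by (rule sum.swap)
    also have "\<dots> = (\<Sum>k<N. b k * G k j)" by (simp add: b_def sum_distrib_right)
    finally show ?thesis .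
  qed
  have bi0: "b i0 = 1"
  proof -
    have "b i0 = (\<Sum>i\<in>A. if i = i0 then 1 else 0)"
      unfolding b_def
    proof (rule sum.cong[OF refl])
      fix i assume iA: "i \<in> A"
      show "a i * P i i0 = (if i = i0 then 1 else 0)"
      proof (cases "i = i0")
        case True then show ?thesis using i0A Pd by (simp add: N_def)
      next
        case False
        show ?thesis
        proof (cases "a i = 0")
          case True then show ?thesis using False by simp
        next
          case nz0: False
          then have "i \<in> F" using iA by (simp add: F_def)
          then have "i0 < i" using i0min False by force
          then show ?thesis using Pl AN[OF iA] False by (simp add: N_def)
        qed
      qed
    qed
    also have "\<dots> = 1" using i0A finA by simp
    finally show ?thesis .
  qed
  have blow: "\<forall>k<i0. b k = 0"
  proof (intro allI impI)
    fix k assume k: "k < i0"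
    show "b k = 0" unfolding b_def
    proof (rule sum.neutral, rule ballI)
      fix i assume iA: "i \<in> A"
      show "a i * P i k = 0"
      proof (cases "a i = 0")
        case True then show ?thesis by simp
      next
        case False
        then have "i \<in> F" using iA by (simp add: F_def)
        then have "k < i" using i0min k by force
        then show ?thesis using Pl AN[OF iA] by (simp add: N_def)
      qed
    qed
  qed
  have "card {j. j < 2 ^ m \<and> sub j i0} \<le> card {j. j < 2 ^ m \<and> (\<Sum>k<2 ^ m. b k * polarG m k j) \<noteq> 0}"
    by (rule key) (use i0A bi0 blow in \<open>simp_all add: N_def\<close>)
  also have "\<dots> = hweight (2 ^ m) c"
    unfolding hweight_def ca using cs by (simp add: N_def G_def) (rule arg_cong[where f=card], blast)
  finally show ?thesis using i0A by blast
qed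

lemma rc_G_eq:
  assumes A: "A \<subseteq> {0..<N}"
  shows "row_code N B A = row_code N (matmul N (\<lambda>i k. if i = k then 1 else 0) B) A"
proof -
  have "matmul N (\<lambda>i k. if i = k then 1 else 0) B i j = B i j" if "i \<in> A" for i j
  proof -
    have "matmul N (\<lambda>i k. if i = k then 1 else 0) B i j = (\<Sum>k<N. if i = k then B k j else 0)"
      unfolding matmul_def by (rule sum.cong) auto
    also have "\<dots> = B i j" using that A by auto
    finally show ?thesis .
  qed
  then have "(\<Sum>i\<in>A. a i * matmul N (\<lambda>i k. if i = k then 1 else 0) B i j) = (\<Sum>i\<in>A. a i * B i j)" for a j
    by (intro sum.cong) simp_all
  then show ?thesis unfolding row_code_def by (simp only:)
qed

lemma lowerG:
  assumes A: "A \<subseteq> {0..<2 ^ m}"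
    and c: "c \<in> row_code (2 ^ m) (polarG m) A"
    and nz: "c \<noteq> (\<lambda>_. 0)"
  shows "\<exists>i\<in>A. card {j. j < 2 ^ m \<and> sub j i} \<le> hweight (2 ^ m) c"
  by (rule lowerQ[OF A, of "\<lambda>i k. if i = k then 1 else 0"]) (use c nz rc_G_eq[OF A] in auto)


lemma rowQ:
  fixes N k :: nat and P G :: "nat \<Rightarrow> nat \<Rightarrow> bit"
  assumes Pd: "\<forall>i < N. P i i = 1" and Pl: "\<forall>i < N. \<forall>j < i. P i j = (0::bit)" and kN: "k < N"
  shows "(\<Sum>k'<N. P k k' * G k' j) = G k j + (\<Sum>k'\<in>{k'. k < k' \<and> k' < N \<and> P k k' = 1}. G k' j)"
proof -
  define F where "F = {k'. k < k' \<and> k' < N \<and> P k k' = 1}"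
  have finF: "finite F" unfolding F_def by (rule finite_subset[of _ "{..<N}"]) auto
  have "(\<Sum>k'<N. P k k' * G k' j) = (\<Sum>k'\<in>insert k F. G k' j)"
  proof (rule sum.mono_neutral_cong_right)
    show "finite {..<N}" by simp
    show "insert k F \<subseteq> {..<N}" using kN by (auto simp: F_def)
    show "\<forall>x\<in>{..<N} - insert k F. P k x * G x j = 0"
    proof
      fix x assume x: "x \<in> {..<N} - insert k F"
      show "P k x * G x j = 0"
      proof (cases "x < k")
        case True then show ?thesis using Pl kN by simp
      next
        case False
        then have "k < x" using x by auto
        then have "P k x \<noteq> 1" using x by (auto simp: F_def)
        then show ?thesis by simp
      qed
    qed
    show "P k x * G x j = G x j" if "x \<in> insert k F" for x using that Pd kN by (auto simp: F_def)
  qed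
  also have "\<dots> = G k j + (\<Sum>k'\<in>F. G k' j)" using finF by (simp add: F_def)
  finally show ?thesis unfolding F_def .
qed

theorem proposition5:
  fixes m r :: nat and A :: "nat set" and P :: "nat \<Rightarrow> nat \<Rightarrow> bit"
  assumes "m \<ge> 1"
    and "A \<subseteq> {0..<2 ^ m}" and "A \<noteq> {}"
    and "decreasing (mono_of_index m ` A)"
    and "r \<le> m"
    and "min_distance (2 ^ m) (row_code (2 ^ m) (polarG m) A) = 2 ^ (m - r)"
    and "\<forall>i < 2 ^ m. P i i = 1"
    and "\<forall>i < 2 ^ m. \<forall>j < i. P i j = 0"
  shows "min_distance (2 ^ m) (row_code (2 ^ m) (matmul (2 ^ m) P (polarG m)) A) = 2 ^ (m - r)
    \<and> card {c \<in> row_code (2 ^ m) (matmul (2 ^ m) P (polarG m)) A. hweight (2 ^ m) c = 2 ^ (m - r)} \<ge> 2 ^ r"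
proof -
  note A = assms(2) and dec = assms(4) and rm = assms(5) and md = assms(6) and Pd = assms(7) and Pl = assms(8)
  define N :: nat where "N = 2 ^ m"
  define G where "G = polarG m"
  define V where "V = row_code N (matmul N P G) A"
  define VG where "VG = row_code N G A"
  define g where "g k = (\<lambda>j. if j < N then G k j else 0)" for k
  have finA: "finite A" using A finite_subset by blast
  have AN: "i \<in> A \<Longrightarrow> i < N" for i using A by (auto simp: N_def)
  have rN: "(2::nat) ^ r \<le> N" unfolding N_def using rm by (simp add: power_increasing)
  have gVG: "g i \<in> VG" if "i \<in> A" for i unfolding g_def VG_def using that finA by (rule rc_row)
  have gw: "i < N \<Longrightarrow> hweight N (g i) = card {j. j < N \<and> sub j i}" for i
    unfolding hweight_def g_def G_def N_def
    by (rule arg_cong[where f=card]) (auto simp: polarG_char)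
  have gnz: "i < N \<Longrightarrow> g i \<noteq> (\<lambda>_. 0)" for i
  proof
    assume "i < N" "g i = (\<lambda>_. 0)"
    then have "g i i = 0" by simp
    with \<open>i < N\<close> show False by (simp add: g_def G_def N_def polarG_char)
  qed
  define MSG where "MSG = {hweight N c |c. c \<in> VG \<and> c \<noteq> (\<lambda>_. 0)}"
  have finMSG: "finite MSG"
    by (rule finite_subset[of _ "{..N}"]) (auto simp: MSG_def hweight_le)
  have mdG: "Min MSG = 2 ^ (m - r)" using md by (simp add: min_distance_def MSG_def VG_def N_def G_def)
  have lbA: "2 ^ (m - r) \<le> card {j. j < N \<and> sub j i}" if "i \<in> A" for i
  proof -
    have "hweight N (g i) \<in> MSG" unfolding MSG_def using gVG[OF that] gnz[OF AN[OF that]] by blast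
    then have "Min MSG \<le> hweight N (g i)" using finMSG by simp
    then show ?thesis using mdG gw[OF AN[OF that]] by simp
  qed
  obtain i1 where "i1 \<in> A" using assms(3) by blast
  then have "MSG \<noteq> {}" unfolding MSG_def using gVG gnz AN by blast
  then have "Min MSG \<in> MSG" using finMSG by simp
  then have "2 ^ (m - r) \<in> MSG" by (simp only: mdG)
  then obtain c0 where c0: "c0 \<in> VG" "c0 \<noteq> (\<lambda>_. 0)" "hweight N c0 = 2 ^ (m - r)"
    unfolding MSG_def by auto
  obtain i0 where i0: "i0 \<in> A" "card {j. j < N \<and> sub j i0} \<le> 2 ^ (m - r)"
    using lowerG[OF A, of c0] c0 by (auto simp: VG_def N_def G_def)
  define p where "p = card {l. l < m \<and> bit i0 l}"
  define q where "q = card {l. l < m \<and> \<not> bit i0 l}"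
  have "(2::nat) ^ p \<le> 2 ^ (m - r)" using i0(2) pow_count[of i0 m] AN[OF i0(1)] by (simp add: p_def N_def)
  then have "p \<le> m - r" by (simp add: power_le_imp_le_exp)
  moreover have "p + q = m" unfolding p_def q_def by (rule card_split)
  ultimately have rq: "r \<le> q" using rm by linarith
  define I where "I = mono_of_index m ` A"
  have f0: "mono_of_index m i0 = {l. l < m \<and> \<not> bit i0 l}"
    using AN[OF i0(1)] by (simp add: mono_char N_def)
  have S0I: "{0..<q} \<in> I"
  proof -
    have "mono_of_index m i0 \<in> I" using i0(1) by (simp add: I_def)
    moreover have "mono_le {0..<q} (mono_of_index m i0)"
      unfolding mono_le_def
    proof (intro exI conjI)
      show "mono_of_index m i0 \<subseteq> mono_of_index m i0" by simp
      show "shift_le {0..<q} (mono_of_index m i0)"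
        unfolding shift_le_def f0
      proof (intro conjI allI impI)
        show "finite {0..<q}" by simp
        show "finite {l. l < m \<and> \<not> bit i0 l}" by simp
        show "card {0..<q} = card {l. l < m \<and> \<not> bit i0 l}" by (simp add: q_def)
        fix l assume "l < card {0..<q}"
        then have l: "l < q" by simp
        have "l \<le> sorted_list_of_set {l. l < m \<and> \<not> bit i0 l} ! l"
          by (rule sorted_ge) (use l in \<open>simp_all add: strict_sorted_list_of_set q_def\<close>)
        then show "sorted_list_of_set {0..<q} ! l \<le> sorted_list_of_set {l. l < m \<and> \<not> bit i0 l} ! l"
          using l by simp
      qed
    qed
    ultimately show ?thesis using dec unfolding decreasing_def I_def by blast
  qed
  define top where "top = N - 2 ^ r"
  have TA: "top + t \<in> A" if t: "t < 2 ^ r" for t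
  proof -
    have kN: "top + t < N" using t rN by (simp add: top_def)
    have mk: "mono_of_index m (top + t) = {l. l < m \<and> \<not> bit (top + t) l}"
      using kN by (simp add: mono_char N_def)
    have sub0: "mono_of_index m (top + t) \<subseteq> {0..<q}"
    proof
      fix l assume "l \<in> mono_of_index m (top + t)"
      then have "l < m" "\<not> bit (top + t) l" using mk by auto
      then have "l < r" using top_bits[OF rm t, of l] by (auto simp: top_def N_def)
      then show "l \<in> {0..<q}" using rq by simp
    qed
    have "mono_le (mono_of_index m (top + t)) {0..<q}"
      unfolding mono_le_def shift_le_def
      by (rule exI[of _ "mono_of_index m (top + t)"]) (use sub0 finite_subset in auto)
    then have "mono_of_index m (top + t) \<in> I" using S0I dec unfolding decreasing_def I_def by blast
    then obtain k' where k': "k' \<in> A" "mono_of_index m (top + t) = mono_of_index m k'"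
      unfolding I_def by blast
    have k'N: "k' < N" using AN[OF k'(1)] .
    have eqs: "{l. l < m \<and> \<not> bit (top + t) l} = {l. l < m \<and> \<not> bit k' l}"
      using k'(2) mk mono_char[of k' m] k'N by (simp add: N_def)
    have "top + t = k'"
    proof (rule bit_eqI)
      fix l
      show "bit (top + t) l = bit k' l"
      proof (cases "l < m")
        case True then show ?thesis using eqs by (auto simp: set_eq_iff)
      next
        case False
        then show ?thesis using kN k'N lt_pow_bits[of "top + t" m] lt_pow_bits[of k' m]
          by (auto simp: N_def)
      qed
    qed
    then show ?thesis using k'(1) by simp
  qed
  have gV: "g k \<in> V" if "top \<le> k" "k < N" for k
  proof -
    have "\<forall>k. N - k = d \<longrightarrow> top \<le> k \<longrightarrow> k < N \<longrightarrow> g k \<in> V" for d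
    proof (induction d rule: less_induct)
      case (less d)
      show ?case
      proof (intro allI impI)
        fix k assume d: "N - k = d" and k: "top \<le> k" "k < N"
        define F where "F = {k'. k < k' \<and> k' < N \<and> P k k' = 1}"
        have kA: "k \<in> A" using TA[of "k - top"] k rN by (simp add: top_def)
        have w: "(\<lambda>j. if j < N then matmul N P G k j else 0) \<in> V"
          unfolding V_def using kA finA by (rule rc_row)
        have Fv: "\<forall>k'\<in>F. g k' \<in> V"
        proof
          fix k' assume "k' \<in> F"
          then have "k < k'" "k' < N" by (auto simp: F_def)
          then show "g k' \<in> V" using less.IH[of "N - k'"] d k by auto
        qed
        have finF: "finite F" unfolding F_def by (rule finite_subset[of _ "{..<N}"]) auto
        have "(\<lambda>j. \<Sum>k'\<in>F. g k' j) \<in> V" using finF Fv unfolding V_def by (rule rc_sum)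
        with w have sV: "(\<lambda>j. (if j < N then matmul N P G k j else 0) + (\<Sum>k'\<in>F. g k' j)) \<in> V"
          unfolding V_def by (rule rc_add)
        have "g k = (\<lambda>j. (if j < N then matmul N P G k j else 0) + (\<Sum>k'\<in>F. g k' j))"
        proof
          fix j
          show "g k j = (if j < N then matmul N P G k j else 0) + (\<Sum>k'\<in>F. g k' j)"
          proof (cases "j < N")
            case True
            have "matmul N P G k j = G k j + (\<Sum>k'\<in>F. G k' j)"
              unfolding matmul_def F_def
              by (rule rowQ) (use Pd Pl k in \<open>simp_all add: N_def\<close>)
            then have "G k j = matmul N P G k j + (\<Sum>k'\<in>F. G k' j)" by (rule bit_cancel2)
            then show ?thesis using True by (simp add: g_def)
          next
            case False then show ?thesis by (simp add: g_def)
          qed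
        qed
        with sV show "g k \<in> V" by simp
      qed
    qed
    then show ?thesis using that by blast
  qed
  define e where "e t = (\<lambda>j. if j < N \<and> take_bit r j = t then 1 else (0::bit))" for t
  have eV: "e t \<in> V" if "t < 2 ^ r" for t
    using that
  proof (induction t rule: less_induct)
    case (less t)
    define St where "St = {s. s < 2 ^ r \<and> sub s t}"
    have finSt: "finite St" unfolding St_def by simp
    have tSt: "t \<in> St" using less.prems by (simp add: St_def)
    have gt: "g (top + t) \<in> V" using gV[of "top + t"] less.prems rN by (simp add: top_def)
    have ident: "g (top + t) j = (\<Sum>s\<in>St. e s j)" for j
    proof (cases "j < N")
      case True
      have "g (top + t) j = (if sub (take_bit r j) t then 1 else 0)"
        using True less.prems rN sub_top[OF rm less.prems, of j]
        by (simp add: g_def G_def polarG_char top_def N_def)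
      also have "\<dots> = (\<Sum>s\<in>St. if take_bit r j = s then 1 else 0)"
        using finSt by (simp add: St_def)
      also have "\<dots> = (\<Sum>s\<in>St. e s j)" using True by (simp add: e_def)
      finally show ?thesis .
    next
      case False then show ?thesis by (simp add: g_def e_def)
    qed
    have "\<forall>s\<in>St - {t}. e s \<in> V"
    proof
      fix s assume s: "s \<in> St - {t}"
      then have "s < t" using sub_le by (auto simp: St_def le_neq_implies_less)
      then show "e s \<in> V" using less.IH less.prems by simp
    qed
    then have RV: "(\<lambda>j. \<Sum>s\<in>St - {t}. e s j) \<in> V" using finSt unfolding V_def by (intro rc_sum) simp_all
    have "e t = (\<lambda>j. g (top + t) j + (\<Sum>s\<in>St - {t}. e s j))"
    proof
      fix j
      have "g (top + t) j = e t j + (\<Sum>s\<in>St - {t}. e s j)"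
        using ident[of j] sum.remove[OF finSt tSt, of "\<lambda>s. e s j"] by simp
      then show "e t j = g (top + t) j + (\<Sum>s\<in>St - {t}. e s j)" by (rule bit_cancel2)
    qed
    then show ?case using rc_add[OF gt[unfolded V_def] RV[unfolded V_def]] unfolding V_def by simp
  qed
  have ew: "hweight N (e t) = 2 ^ (m - r)" if "t < 2 ^ r" for t
  proof -
    have "hweight N (e t) = card {j. j < (2::nat) ^ m \<and> take_bit r j = t}"
      unfolding hweight_def e_def N_def by (rule arg_cong[where f=card]) auto
    then show ?thesis using e_weight[OF rm that] by simp
  qed
  have ett: "e t t = 1" if "t < 2 ^ r" for t
    using that rN by (simp add: e_def take_bit_nat_eq_self)
  have enz: "e t \<noteq> (\<lambda>_. 0)" if "t < 2 ^ r" for t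
    using ett[OF that] by (auto simp: fun_eq_iff)
  have einj: "inj_on e {..<2 ^ r}"
  proof (rule inj_onI)
    fix s t assume s: "s \<in> {..<2 ^ r}" and t: "t \<in> {..<2 ^ r}" and est: "e s = e t"
    then have "e s t = 1" using ett[of t] by simp
    then show "s = t" using t by (auto simp: e_def take_bit_nat_eq_self split: if_splits)
  qed
  define MSQ where "MSQ = {hweight N c |c. c \<in> V \<and> c \<noteq> (\<lambda>_. 0)}"
  have finMSQ: "finite MSQ"
    by (rule finite_subset[of _ "{..N}"]) (auto simp: MSQ_def hweight_le)
  have inMSQ: "2 ^ (m - r) \<in> MSQ"
    unfolding MSQ_def using eV[of 0] enz[of 0] ew[of 0] by force
  have geMSQ: "2 ^ (m - r) \<le> y" if yM: "y \<in> MSQ" for y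
  proof -
    obtain c where c: "c \<in> V" "c \<noteq> (\<lambda>_. 0)" "y = hweight N c" using yM unfolding MSQ_def by blast
    obtain i where "i \<in> A" "card {j. j < N \<and> sub j i} \<le> hweight N c"
      using lowerQ[OF A Pd Pl, of c] c by (auto simp: V_def N_def G_def)
    then show ?thesis using lbA c(3) by fastforce
  qed
  have part1: "Min MSQ = 2 ^ (m - r)" by (rule Min_eqI[OF finMSQ]) (use geMSQ inMSQ in auto)
  have sub2: "e ` {..<2 ^ r} \<subseteq> {c \<in> V. hweight N c = 2 ^ (m - r)}"
    using eV ew by auto
  have "finite {c \<in> V. hweight N c = 2 ^ (m - r)}"
    using rc_finite[of N "matmul N P G" A] by (simp add: V_def)
  then have "card (e ` {..<2 ^ r}) \<le> card {c \<in> V. hweight N c = 2 ^ (m - r)}"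
    using sub2 by (intro card_mono)
  moreover have "card (e ` {..<2 ^ r}) = 2 ^ r" using einj by (simp add: card_image)
  ultimately have part2: "2 ^ r \<le> card {c \<in> V. hweight N c = 2 ^ (m - r)}" by simp
  show ?thesis
    using part1 part2 unfolding min_distance_def MSQ_def V_def N_def G_def by simp
qed

end
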